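(* Let $K\subset\mathbb{C}^2$ be compact, nonpluripolar, and satisfy $e^{i\theta}\circ K=K$ for all $\theta\in\mathbb{R}$. Let $\theta\in\mathcal{C}$ and let $\{Q_n\}$, $Q_n\in M^{\prec_C}_{k_n}(\alpha_n)$, be $\theta$-asymptotically Chebyshev for $K$. Then $\{\widehat Q_n\}$ is $\theta$-asymptotically Chebyshev for $K$, where $\widehat Q_n$ is the top part of $Q_n$ relative to $Poly(k_nC)$.
   Context: $a,b$ relatively prime positive integers; $C$ the triangle with vertices $(0,0),(b,0),(0,a)$; $Poly(kC)$ is the space of $p=\sum_{aj+bl\le kab}c_{jl}z_1^jz_2^l$ with top part $\widehat p=\sum_{aj+bl=kab}c_{jl}z_1^jz_2^l$; $\deg_C(p)=\min\{k:p\in Poly(kC)\}$. $\lambda\circ(z_1,z_2)=(\lambda^az_1,\lambda^bz_2)$. Order $\prec_C$: $\alpha\prec_C\beta$ if $\deg_C(z^\alpha)<\deg_C(z^\beta)$, or equal $C$-degrees and $\alpha_2<\beta_2$. $M^{\prec_C}_k(\alpha)=\{p\in Poly(kC):p=z^\alpha+\sum_{\beta\prec_C\alpha}c_\beta z^\beta\}$; $T^C_k(K,\alpha)=\inf\{\|p\|_K:p\in M^{\prec_C}_k(\alpha)\}^{1/k}$. $\mathcal{C}=\{\phi:a\phi_1+b\phi_2=ab,\ \phi_1\phi_2>0\}$. For $\theta\in\mathcal{C}$, $\tau(K,\theta)=\lim_{k\to\infty,\alpha/k\to\theta}T^C_k(K,\alpha)$ (this limit exists). $\{Q_n\}$ is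 $\theta$-asymptotically Chebyshev for $K$ if $Q_n\in M^{\prec_C}_{k_n}(\alpha_n)$ with $k_n\to\infty$, $\alpha_n/k_n\to\theta$, and $\|Q_n\|_K^{1/k_n}\to\tau(K,\theta)$.
   Formalization: The C-degree $\deg_C(z^\alpha)$, used in $\prec_C$, is the least real k >= 0 with alpha in kC, and theta-asymptotically Chebyshev sequences, like the limit defining $\tau(K,\theta)$, have each $\alpha_n$ on the top edge of $k_nC$, with real $k_n$. Apart from conventions, each condition added here is assumed in the paper as well or is needed for the statement above to hold. *)

theory Defs
  imports "HOL-Complex_Analysis.Complex_Analysis"
begin

definition usc_fun :: "('a::topological_space \<Rightarrow> ereal) \<Rightarrow> bool" where
  "usc_fun u \<longleftrightarrow> (\<forall>c::ereal. open {z. u z < c})"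

text \<open>Harmonic function on an open disc: real part of a holomorphic function
  (equivalent to the Laplace-equation definition on a disc).\<close>
definition harmonic_on_ball :: "(complex \<Rightarrow> real) \<Rightarrow> complex \<Rightarrow> real \<Rightarrow> bool" where
  "harmonic_on_ball h z0 r \<longleftrightarrow>
     (\<exists>f. f holomorphic_on ball z0 r \<and> (\<forall>z\<in>ball z0 r. h z = Re (f z)))"

text \<open>Subharmonic on the whole plane (the function identically -\<infinity> is allowed):
  upper semicontinuous, never +\<infinity>, and satisfying the harmonic-majorant
  property on every closed disc.\<close>
definition subharmonic :: "(complex \<Rightarrow> ereal) \<Rightarrow> bool" where
  "subharmonic u \<longleftrightarrow> usc_fun u \<and> (\<forall>z. u z < \<infinity>) \<and>
     (\<forall>z0 r h. r > 0 \<longrightarrow> continuous_on (cball z0 r) h \<longrightarrow> harmonic_on_ball h z0 r \<longrightarrow>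
        (\<forall>z\<in>sphere z0 r. u z \<le> ereal (h z)) \<longrightarrow> (\<forall>z\<in>cball z0 r. u z \<le> ereal (h z)))"

definition psh :: "(complex \<times> complex \<Rightarrow> ereal) \<Rightarrow> bool" where
  "psh u \<longleftrightarrow> usc_fun u \<and> (\<forall>z. u z < \<infinity>) \<and>
     (\<forall>p q :: complex \<times> complex.
        subharmonic (\<lambda>w. u (fst p + w * fst q, snd p + w * snd q)))"

definition pluripolar :: "(complex \<times> complex) set \<Rightarrow> bool" where
  "pluripolar E \<longleftrightarrow> (\<exists>u. psh u \<and> (\<exists>z. u z \<noteq> -\<infinity>) \<and> E \<subseteq> {z. u z = -\<infinity>})"

type_synonym poly2 = "nat \<times> nat \<Rightarrow> complex"

definition peval :: "poly2 \<Rightarrow> complex \<times> complex \<Rightarrow> complex" where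
  "peval p z = (\<Sum>\<alpha>\<in>{\<alpha>. p \<alpha> \<noteq> 0}. p \<alpha> * fst z ^ fst \<alpha> * snd z ^ snd \<alpha>)"

definition supnorm :: "(complex \<times> complex) set \<Rightarrow> poly2 \<Rightarrow> real" where
  "supnorm K p = Sup ((\<lambda>z. cmod (peval p z)) ` K)"

text \<open>C-degree of the monomial z^\<alpha> (real-valued: the least k \<ge> 0 with \<alpha> \<in> kC).\<close>
definition degC :: "nat \<Rightarrow> nat \<Rightarrow> nat \<times> nat \<Rightarrow> real" where
  "degC a b \<alpha> = (real a * real (fst \<alpha>) + real b * real (snd \<alpha>)) / (real a * real b)"

definition inPolyC :: "nat \<Rightarrow> nat \<Rightarrow> real \<Rightarrow> poly2 \<Rightarrow> bool" where
  "inPolyC a b k p \<longleftrightarrow> (\<forall>j l. p (j, l) \<noteq> 0 \<longrightarrow>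
      real a * real j + real b * real l \<le> k * real a * real b)"

definition topC :: "nat \<Rightarrow> nat \<Rightarrow> real \<Rightarrow> poly2 \<Rightarrow> poly2" where
  "topC a b k p = (\<lambda>(j, l). if real a * real j + real b * real l = k * real a * real b
                            then p (j, l) else 0)"

definition precC :: "nat \<Rightarrow> nat \<Rightarrow> nat \<times> nat \<Rightarrow> nat \<times> nat \<Rightarrow> bool" where
  "precC a b \<alpha> \<beta> \<longleftrightarrow> degC a b \<alpha> < degC a b \<beta> \<or>
                      (degC a b \<alpha> = degC a b \<beta> \<and> snd \<alpha> < snd \<beta>)"

definition MC :: "nat \<Rightarrow> nat \<Rightarrow> real \<Rightarrow> nat \<times> nat \<Rightarrow> poly2 set" where
  "MC a b k \<alpha> = {p. inPolyC a b k p \<and> p \<alpha> = 1 \<and>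
                     (\<forall>\<beta>. p \<beta> \<noteq> 0 \<longrightarrow> \<beta> = \<alpha> \<or> precC a b \<beta> \<alpha>)}"

definition TC :: "nat \<Rightarrow> nat \<Rightarrow> (complex \<times> complex) set \<Rightarrow> real \<Rightarrow> nat \<times> nat \<Rightarrow> real" where
  "TC a b K k \<alpha> = (Inf (supnorm K ` MC a b k \<alpha>)) powr (1 / k)"

definition scaled :: "nat \<times> nat \<Rightarrow> real \<Rightarrow> real \<times> real" where
  "scaled \<alpha> k = (real (fst \<alpha>) / k, real (snd \<alpha>) / k)"

definition CurveC :: "nat \<Rightarrow> nat \<Rightarrow> (real \<times> real) set" where
  "CurveC a b = {\<phi>. real a * fst \<phi> + real b * snd \<phi> = real a * real b \<and> fst \<phi> * snd \<phi> > 0}"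

definition tau :: "nat \<Rightarrow> nat \<Rightarrow> (complex \<times> complex) set \<Rightarrow> real \<times> real \<Rightarrow> real" where
  "tau a b K \<theta> = (THE t. \<forall>k :: nat \<Rightarrow> real. \<forall>\<alpha> :: nat \<Rightarrow> nat \<times> nat.
      (filterlim k at_top sequentially \<and> (\<forall>n. k n = degC a b (\<alpha> n)) \<and>
       ((\<lambda>n. scaled (\<alpha> n) (k n)) \<longlongrightarrow> \<theta>) sequentially)
      \<longrightarrow> ((\<lambda>n. TC a b K (k n) (\<alpha> n)) \<longlongrightarrow> t) sequentially)"

definition asymp_cheb ::
  "nat \<Rightarrow> nat \<Rightarrow> (complex \<times> complex) set \<Rightarrow> real \<times> real \<Rightarrow>
   (nat \<Rightarrow> poly2) \<Rightarrow> (nat \<Rightarrow> real) \<Rightarrow> (nat \<Rightarrow> nat \<times> nat) \<Rightarrow> bool" where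
  "asymp_cheb a b K \<theta> Q k \<alpha> \<longleftrightarrow>
     (\<forall>n. k n = degC a b (\<alpha> n) \<and> Q n \<in> MC a b (k n) (\<alpha> n)) \<and>
     filterlim k at_top sequentially \<and>
     ((\<lambda>n. scaled (\<alpha> n) (k n)) \<longlongrightarrow> \<theta>) sequentially \<and>
     ((\<lambda>n. supnorm K (Q n) powr (1 / k n)) \<longlongrightarrow> tau a b K \<theta>) sequentially"

end

theory Submission
  imports Defs
begin
definition addp :: "nat \<times> nat \<Rightarrow> nat \<times> nat \<Rightarrow> nat \<times> nat" where
  "addp x y = (fst x + fst y, snd x + snd y)"

definition supp :: "poly2 \<Rightarrow> (nat \<times> nat) set" where
  "supp p = {\<alpha>. p \<alpha> \<noteq> 0}"

definition pmul :: "poly2 \<Rightarrow> poly2 \<Rightarrow> poly2" where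
  "pmul p q \<gamma> = (\<Sum>x\<in>supp p \<times> supp q. if addp (fst x) (snd x) = \<gamma> then p (fst x) * q (snd x) else 0)"

definition mon :: "complex \<times> complex \<Rightarrow> nat \<times> nat \<Rightarrow> complex" where
  "mon z \<alpha> = fst z ^ fst \<alpha> * snd z ^ snd \<alpha>"

lemma peval_superset:
  assumes "finite S" "supp p \<subseteq> S"
  shows "peval p z = (\<Sum>\<alpha>\<in>S. p \<alpha> * mon z \<alpha>)"
proof -
  have "(\<Sum>\<alpha>|p \<alpha> \<noteq> 0. p \<alpha> * (fst z ^ fst \<alpha> * snd z ^ snd \<alpha>)) = (\<Sum>\<alpha>\<in>S. p \<alpha> * (fst z ^ fst \<alpha> * snd z ^ snd \<alpha>))"
    using assms unfolding supp_def by (intro sum.mono_neutral_left) auto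
  then show ?thesis by (simp add: peval_def mon_def mult.assoc)
qed

lemma peval_supp: "finite (supp p) \<Longrightarrow> peval p z = (\<Sum>\<alpha>\<in>supp p. p \<alpha> * mon z \<alpha>)"
  using peval_superset by blast

lemma mon_addp: "mon z (addp x y) = mon z x * mon z y"
  by (simp add: mon_def addp_def power_add)

lemma pmul_zero:
  assumes "\<gamma> \<notin> (\<lambda>x. addp (fst x) (snd x)) ` (supp p \<times> supp q)"
  shows "pmul p q \<gamma> = 0"
  unfolding pmul_def
proof (rule sum.neutral, rule ballI)
  fix x assume "x \<in> supp p \<times> supp q"
  then have "addp (fst x) (snd x) \<noteq> \<gamma>" using assms by force
  then show "(if addp (fst x) (snd x) = \<gamma> then p (fst x) * q (snd x) else 0) = 0" by simp
qed

lemma pmul_supp: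
  shows "supp (pmul p q) \<subseteq> (\<lambda>x. addp (fst x) (snd x)) ` (supp p \<times> supp q)"
proof
  fix \<gamma> assume "\<gamma> \<in> supp (pmul p q)"
  then have "pmul p q \<gamma> \<noteq> 0" by (simp add: supp_def)
  then show "\<gamma> \<in> (\<lambda>x. addp (fst x) (snd x)) ` (supp p \<times> supp q)" using pmul_zero by blast
qed

lemma finite_supp_pmul:
  assumes "finite (supp p)" "finite (supp q)"
  shows "finite (supp (pmul p q))"
proof (rule finite_subset[OF pmul_supp])
  show "finite ((\<lambda>x. addp (fst x) (snd x)) ` (supp p \<times> supp q))" using assms by simp
qed

lemma peval_pmul:
  assumes fp: "finite (supp p)" and fq: "finite (supp q)"
  shows "peval (pmul p q) z = peval p z * peval q z"
proof -
  define P where "P = supp p \<times> supp q"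
  define T where "T = (\<lambda>x. addp (fst x) (snd x)) ` P"
  have fP: "finite P" using fp fq by (simp add: P_def)
  have fT: "finite T" using fP by (simp add: T_def)
  have "peval (pmul p q) z = (\<Sum>\<gamma>\<in>T. pmul p q \<gamma> * mon z \<gamma>)"
    using pmul_supp fT by (intro peval_superset) (auto simp: T_def P_def)
  also have "\<dots> = (\<Sum>\<gamma>\<in>T. \<Sum>x\<in>P. (if addp (fst x) (snd x) = \<gamma> then p (fst x) * q (snd x) else 0) * mon z \<gamma>)"
    by (simp add: pmul_def P_def sum_distrib_right)
  also have "\<dots> = (\<Sum>x\<in>P. \<Sum>\<gamma>\<in>T. (if addp (fst x) (snd x) = \<gamma> then p (fst x) * q (snd x) * mon z \<gamma> else 0))"
    by (subst sum.swap) (intro sum.cong refl; simp)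
  also have "\<dots> = (\<Sum>x\<in>P. p (fst x) * q (snd x) * mon z (addp (fst x) (snd x)))"
    by (intro sum.cong refl, subst sum.delta') (auto simp: T_def fP)
  also have "\<dots> = (\<Sum>x\<in>P. (p (fst x) * mon z (fst x)) * (q (snd x) * mon z (snd x)))"
    by (intro sum.cong refl) (simp add: mon_addp algebra_simps)
  also have "\<dots> = (\<Sum>\<beta>\<in>supp p. p \<beta> * mon z \<beta>) * (\<Sum>\<beta>\<in>supp q. q \<beta> * mon z \<beta>)"
    unfolding P_def sum_product sum.cartesian_product by (simp add: case_prod_beta)
  also have "\<dots> = peval p z * peval q z" using fp fq by (simp add: peval_supp)
  finally show ?thesis .
qed

definition wt :: "nat \<Rightarrow> nat \<Rightarrow> nat \<times> nat \<Rightarrow> nat" where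
  "wt a b \<alpha> = a * fst \<alpha> + b * snd \<alpha>"

definition smul :: "nat \<Rightarrow> nat \<times> nat \<Rightarrow> nat \<times> nat" where
  "smul j \<alpha> = (j * fst \<alpha>, j * snd \<alpha>)"

definition delta :: "nat \<times> nat \<Rightarrow> poly2" where
  "delta \<alpha> = (\<lambda>\<beta>. if \<beta> = \<alpha> then 1 else 0)"

context
  fixes a b :: nat
  assumes apos: "a > 0" and bpos: "b > 0"
begin

lemma degC_wt: "degC a b \<alpha> = real (wt a b \<alpha>) / (real a * real b)"
  by (simp add: degC_def wt_def)

lemma degC_less_iff: "degC a b \<alpha> < degC a b \<beta> \<longleftrightarrow> wt a b \<alpha> < wt a b \<beta>"
proof -
  have "real a * real b > 0" using apos bpos by simp
  then show ?thesis using apos bpos by (auto simp: degC_wt divide_less_cancel mult_less_0_iff)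
qed

lemma degC_eq_iff: "degC a b \<alpha> = degC a b \<beta> \<longleftrightarrow> wt a b \<alpha> = wt a b \<beta>"
  using apos bpos by (simp add: degC_wt)

lemma wt_addp: "wt a b (addp x y) = wt a b x + wt a b y"
  by (simp add: wt_def addp_def algebra_simps)

lemma degC_addp: "degC a b (addp x y) = degC a b x + degC a b y"
  by (simp add: degC_wt wt_addp add_divide_distrib)

lemma degC_nonneg: "degC a b \<alpha> \<ge> 0"
  by (simp add: degC_wt)

lemma precC_wt: "precC a b \<beta> \<alpha> \<longleftrightarrow> wt a b \<beta> < wt a b \<alpha> \<or> (wt a b \<beta> = wt a b \<alpha> \<and> snd \<beta> < snd \<alpha>)"
  by (simp add: precC_def degC_less_iff degC_eq_iff)

lemma wt_snd_eq: "wt a b \<beta> = wt a b \<alpha> \<Longrightarrow> snd \<beta> = snd \<alpha> \<Longrightarrow> \<beta> = \<alpha>"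
  using apos by (cases \<alpha>; cases \<beta>) (auto simp: wt_def)

lemma arith_aux:
  fixes w1 w2 w3 w4 s1 s2 s3 s4 :: nat
  assumes "(w1 = w3 \<and> s1 = s3) \<or> w1 < w3 \<or> (w1 = w3 \<and> s1 < s3)"
      and "(w2 = w4 \<and> s2 = s4) \<or> w2 < w4 \<or> (w2 = w4 \<and> s2 < s4)"
  shows "(w1 + w2 = w3 + w4 \<and> s1 + s2 = s3 + s4) \<or> w1 + w2 < w3 + w4 \<or> (w1 + w2 = w3 + w4 \<and> s1 + s2 < s3 + s4)"
    and "w1 + w2 = w3 + w4 \<Longrightarrow> s1 + s2 = s3 + s4 \<Longrightarrow> w1 = w3 \<and> s1 = s3 \<and> w2 = w4 \<and> s2 = s4"
  using assms by linarith+

lemma addp_eq_iff: "addp x y = addp u v \<longleftrightarrow> wt a b (addp x y) = wt a b (addp u v) \<and> snd (addp x y) = snd (addp u v)"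
proof
  assume "addp x y = addp u v" then show "wt a b (addp x y) = wt a b (addp u v) \<and> snd (addp x y) = snd (addp u v)" by simp
next
  assume h: "wt a b (addp x y) = wt a b (addp u v) \<and> snd (addp x y) = snd (addp u v)"
  show "addp x y = addp u v" using wt_snd_eq[OF conjunct1[OF h] conjunct2[OF h]] .
qed

lemma prec_add:
  assumes "\<beta> = \<alpha> \<or> precC a b \<beta> \<alpha>" "\<beta>' = \<alpha>' \<or> precC a b \<beta>' \<alpha>'"
  shows "addp \<beta> \<beta>' = addp \<alpha> \<alpha>' \<or> precC a b (addp \<beta> \<beta>') (addp \<alpha> \<alpha>')"
    and "addp \<beta> \<beta>' = addp \<alpha> \<alpha>' \<Longrightarrow> \<beta> = \<alpha> \<and> \<beta>' = \<alpha>'"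
proof -
  have s: "snd (addp x y) = snd x + snd y" for x y by (simp add: addp_def)
  have h1: "(wt a b \<beta> = wt a b \<alpha> \<and> snd \<beta> = snd \<alpha>) \<or> wt a b \<beta> < wt a b \<alpha> \<or> (wt a b \<beta> = wt a b \<alpha> \<and> snd \<beta> < snd \<alpha>)"
    using assms(1) unfolding precC_wt by blast
  have h2: "(wt a b \<beta>' = wt a b \<alpha>' \<and> snd \<beta>' = snd \<alpha>') \<or> wt a b \<beta>' < wt a b \<alpha>' \<or> (wt a b \<beta>' = wt a b \<alpha>' \<and> snd \<beta>' < snd \<alpha>')"
    using assms(2) unfolding precC_wt by blast
  note A = arith_aux[OF h1 h2]
  show "addp \<beta> \<beta>' = addp \<alpha> \<alpha>' \<or> precC a b (addp \<beta> \<beta>') (addp \<alpha> \<alpha>')"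
    unfolding precC_wt addp_eq_iff[of \<beta> \<beta>'] wt_addp s using A(1) .
  assume eq: "addp \<beta> \<beta>' = addp \<alpha> \<alpha>'"
  then have "wt a b \<beta> + wt a b \<beta>' = wt a b \<alpha> + wt a b \<alpha>'" "snd \<beta> + snd \<beta>' = snd \<alpha> + snd \<alpha>'"
    unfolding addp_eq_iff[of \<beta> \<beta>'] wt_addp s by blast+
  from A(2)[OF this] show "\<beta> = \<alpha> \<and> \<beta>' = \<alpha>'" using wt_snd_eq by blast
qed

lemma MC_iff: "p \<in> MC a b (degC a b \<alpha>) \<alpha> \<longleftrightarrow> p \<alpha> = 1 \<and> (\<forall>\<beta>. p \<beta> \<noteq> 0 \<longrightarrow> \<beta> = \<alpha> \<or> precC a b \<beta> \<alpha>)"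
proof -
  have "inPolyC a b (degC a b \<alpha>) p" if H: "\<forall>\<beta>. p \<beta> \<noteq> 0 \<longrightarrow> \<beta> = \<alpha> \<or> precC a b \<beta> \<alpha>"
  proof -
    have "real a * real j + real b * real l \<le> degC a b \<alpha> * real a * real b" if "p (j,l) \<noteq> 0" for j l
    proof -
      have "(j,l) = \<alpha> \<or> precC a b (j,l) \<alpha>" using H that by blast
      then have "wt a b (j,l) \<le> wt a b \<alpha>" by (auto simp: precC_wt)
      then have "real (wt a b (j,l)) \<le> real (wt a b \<alpha>)" by linarith
      then show ?thesis using apos bpos by (simp add: degC_wt wt_def)
    qed
    then show ?thesis by (simp add: inPolyC_def)
  qed
  then show ?thesis unfolding MC_def by auto
qed

lemma MC_supp:
  assumes "p \<in> MC a b (degC a b \<alpha>) \<alpha>"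
  shows "supp p \<subseteq> {..wt a b \<alpha>} \<times> {..wt a b \<alpha>}"
proof
  fix \<beta> assume "\<beta> \<in> supp p"
  then have "\<beta> = \<alpha> \<or> precC a b \<beta> \<alpha>" using assms unfolding MC_iff supp_def by blast
  then have "wt a b \<beta> \<le> wt a b \<alpha>" by (auto simp: precC_wt)
  moreover have "fst \<beta> \<le> wt a b \<beta>" "snd \<beta> \<le> wt a b \<beta>"
  proof -
    have "fst \<beta> \<le> a * fst \<beta>" "snd \<beta> \<le> b * snd \<beta>" using apos bpos by simp_all
    then show "fst \<beta> \<le> wt a b \<beta>" "snd \<beta> \<le> wt a b \<beta>" unfolding wt_def by linarith+
  qed
  ultimately show "\<beta> \<in> {..wt a b \<alpha>} \<times> {..wt a b \<alpha>}" by (cases \<beta>) auto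
qed

lemma MC_finite: "p \<in> MC a b (degC a b \<alpha>) \<alpha> \<Longrightarrow> finite (supp p)"
  by (rule finite_subset[OF MC_supp]) auto

lemma delta_MC: "delta \<alpha> \<in> MC a b (degC a b \<alpha>) \<alpha>"
  by (simp add: MC_iff delta_def)

lemma pmul_MC:
  assumes p: "p \<in> MC a b (degC a b \<alpha>) \<alpha>" and q: "q \<in> MC a b (degC a b \<beta>) \<beta>"
  shows "pmul p q \<in> MC a b (degC a b (addp \<alpha> \<beta>)) (addp \<alpha> \<beta>)"
proof -
  have pr: "x = \<alpha> \<or> precC a b x \<alpha>" if "x \<in> supp p" for x using p that unfolding MC_iff supp_def by blast
  have qr: "x = \<beta> \<or> precC a b x \<beta>" if "x \<in> supp q" for x using q that unfolding MC_iff supp_def by blast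
  have ap: "\<alpha> \<in> supp p" "\<beta> \<in> supp q" using p q by (auto simp: MC_iff supp_def)
  have "pmul p q (addp \<alpha> \<beta>) = (\<Sum>x\<in>supp p \<times> supp q. if (\<alpha>, \<beta>) = x then p (fst x) * q (snd x) else 0)"
    unfolding pmul_def
  proof (intro sum.cong refl)
    fix x assume x: "x \<in> supp p \<times> supp q"
    have x1: "fst x \<in> supp p" and x2: "snd x \<in> supp q" using x by auto
    have h: "fst x = \<alpha> \<or> precC a b (fst x) \<alpha>" "snd x = \<beta> \<or> precC a b (snd x) \<beta>"
      using pr[OF x1] qr[OF x2] .
    have "addp (fst x) (snd x) = addp \<alpha> \<beta> \<Longrightarrow> (\<alpha>, \<beta>) = x"
      using prec_add(2)[OF h] by (simp add: prod_eq_iff)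
    then have "addp (fst x) (snd x) = addp \<alpha> \<beta> \<longleftrightarrow> (\<alpha>, \<beta>) = x" by auto
    then show "(if addp (fst x) (snd x) = addp \<alpha> \<beta> then p (fst x) * q (snd x) else 0) =
               (if (\<alpha>, \<beta>) = x then p (fst x) * q (snd x) else 0)" by simp
  qed
  also have "\<dots> = 1" using ap p q MC_finite[OF p] MC_finite[OF q] by (subst sum.delta') (auto simp: MC_iff)
  finally have one: "pmul p q (addp \<alpha> \<beta>) = 1" .
  have "\<gamma> = addp \<alpha> \<beta> \<or> precC a b \<gamma> (addp \<alpha> \<beta>)" if "pmul p q \<gamma> \<noteq> 0" for \<gamma>
  proof -
    have "\<gamma> \<in> supp (pmul p q)" using that by (simp add: supp_def)
    then have "\<gamma> \<in> (\<lambda>x. addp (fst x) (snd x)) ` (supp p \<times> supp q)" using pmul_supp by blast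
    then obtain x y where xy: "x \<in> supp p" "y \<in> supp q" "\<gamma> = addp x y" by auto
    show ?thesis unfolding xy(3) by (rule prec_add(1)[OF pr[OF xy(1)] qr[OF xy(2)]])
  qed
  then show ?thesis using one by (simp add: MC_iff)
qed

end

lemma inf_aux:
  fixes S :: "real set"
  assumes "S \<noteq> {}" "\<And>x. x \<in> S \<Longrightarrow> 0 \<le> x" "s \<ge> 0" "\<And>x. x \<in> S \<Longrightarrow> c \<le> x * s"
  shows "c \<le> Inf S * s"
proof (cases "s = 0")
  case True
  obtain x where "x \<in> S" using assms(1) by auto
  then show ?thesis using assms(4) True by fastforce
next
  case False
  then have sp: "s > 0" using assms(3) by simp
  have "c / s \<le> Inf S"
  proof (rule cInf_greatest[OF assms(1)])
    fix x assume "x \<in> S" then show "c / s \<le> x" using assms(4) sp by (simp add: divide_le_eq)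
  qed
  then show ?thesis using sp by (simp add: divide_le_eq)
qed

definition Mf :: "nat \<Rightarrow> nat \<Rightarrow> (complex \<times> complex) set \<Rightarrow> nat \<times> nat \<Rightarrow> real" where
  "Mf a b K \<alpha> = Inf (supnorm K ` MC a b (degC a b \<alpha>) \<alpha>)"

context
  fixes a b :: nat and K :: "(complex \<times> complex) set"
  assumes apos: "a > 0" and bpos: "b > 0" and Kc: "compact K" and Kne: "K \<noteq> {}"
begin

lemma peval_cont: "finite (supp p) \<Longrightarrow> continuous_on K (\<lambda>z. cmod (peval p z))"
proof -
  assume f: "finite (supp p)"
  have eq: "(\<lambda>z. cmod (peval p z)) = (\<lambda>z. cmod (\<Sum>\<alpha>\<in>supp p. p \<alpha> * (fst z ^ fst \<alpha> * snd z ^ snd \<alpha>)))"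
    using peval_supp[OF f] by (simp add: mon_def)
  show ?thesis unfolding eq by (intro continuous_intros)
qed

lemma sn_bdd: "finite (supp p) \<Longrightarrow> bdd_above ((\<lambda>z. cmod (peval p z)) ` K)"
proof -
  assume f: "finite (supp p)"
  have "compact ((\<lambda>z. cmod (peval p z)) ` K)" by (rule compact_continuous_image[OF peval_cont[OF f] Kc])
  then show ?thesis by (intro bounded_imp_bdd_above compact_imp_bounded)
qed

lemma sn_ge: "finite (supp p) \<Longrightarrow> z \<in> K \<Longrightarrow> cmod (peval p z) \<le> supnorm K p"
  unfolding supnorm_def by (rule cSup_upper) (auto intro: sn_bdd)

lemma sn_nonneg: "finite (supp p) \<Longrightarrow> 0 \<le> supnorm K p"
proof -
  assume f: "finite (supp p)"
  obtain z where "z \<in> K" using Kne by auto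
  then show ?thesis using sn_ge[OF f] norm_ge_zero order.trans by blast
qed

lemma sn_le: "(\<And>z. z \<in> K \<Longrightarrow> cmod (peval p z) \<le> c) \<Longrightarrow> supnorm K p \<le> c"
  unfolding supnorm_def by (rule cSup_least) (use Kne in auto)

lemma sn_mul:
  assumes "finite (supp p)" "finite (supp q)"
  shows "supnorm K (pmul p q) \<le> supnorm K p * supnorm K q"
proof (rule sn_le)
  fix z assume z: "z \<in> K"
  have "cmod (peval (pmul p q) z) = cmod (peval p z) * cmod (peval q z)"
    using peval_pmul[OF assms] by (simp add: norm_mult)
  also have "\<dots> \<le> supnorm K p * supnorm K q"
    by (intro mult_mono sn_ge sn_nonneg assms z) auto
  finally show "cmod (peval (pmul p q) z) \<le> supnorm K p * supnorm K q" .
qed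

lemma exR: "\<exists>R::real. R \<ge> 1 \<and> (\<forall>z\<in>K. cmod (fst z) \<le> R \<and> cmod (snd z) \<le> R)"
proof -
  have "bounded K" by (rule compact_imp_bounded[OF Kc])
  then obtain B where B: "\<forall>z\<in>K. norm z \<le> B" unfolding bounded_iff by blast
  have "cmod (fst z) \<le> max 1 B \<and> cmod (snd z) \<le> max 1 B" if "z \<in> K" for z
  proof -
    have "norm z \<le> B" using B that by blast
    moreover have "cmod (fst z) \<le> norm z" using norm_fst_le[of "fst z" "snd z"] by simp
    moreover have "cmod (snd z) \<le> norm z" using norm_snd_le[of "snd z" "fst z"] by simp
    ultimately show ?thesis by linarith
  qed
  then show ?thesis by (intro exI[of _ "max 1 B"]) auto
qed

lemma peval_delta: "peval (delta \<gamma>) z = mon z \<gamma>"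
  by (subst peval_superset[of "{\<gamma>}"]) (auto simp: supp_def delta_def)

lemma finite_delta: "finite (supp (delta \<gamma>))"
  by (rule finite_subset[of _ "{\<gamma>}"]) (auto simp: supp_def delta_def)

lemma sn_delta:
  assumes R: "\<forall>z\<in>K. cmod (fst z) \<le> R \<and> cmod (snd z) \<le> R"
  shows "supnorm K (delta \<gamma>) \<le> R ^ (fst \<gamma> + snd \<gamma>)"
proof (rule sn_le)
  fix z assume "z \<in> K"
  then have "cmod (fst z) \<le> R" "cmod (snd z) \<le> R" using R by auto
  moreover have "0 \<le> R" using calculation norm_ge_zero order.trans by blast
  ultimately have "cmod (fst z) ^ fst \<gamma> * cmod (snd z) ^ snd \<gamma> \<le> R ^ fst \<gamma> * R ^ snd \<gamma>"
    by (intro mult_mono power_mono) auto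
  then show "cmod (peval (delta \<gamma>) z) \<le> R ^ (fst \<gamma> + snd \<gamma>)"
    by (simp add: peval_delta mon_def norm_mult norm_power power_add)
qed

lemma MC_ne: "MC a b (degC a b \<alpha>) \<alpha> \<noteq> {}"
  using delta_MC[OF apos bpos, of \<alpha>] by blast

lemma Mf_le: "p \<in> MC a b (degC a b \<alpha>) \<alpha> \<Longrightarrow> Mf a b K \<alpha> \<le> supnorm K p"
  unfolding Mf_def
  by (rule cInf_lower) (auto intro!: bdd_belowI[of _ 0] sn_nonneg MC_finite[OF apos bpos])

lemma Mf_nonneg: "0 \<le> Mf a b K \<alpha>"
  unfolding Mf_def
  by (rule cInf_greatest) (use MC_ne in \<open>auto intro!: sn_nonneg MC_finite[OF apos bpos]\<close>)

lemma Mf_R: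
  assumes R: "\<forall>z\<in>K. cmod (fst z) \<le> R \<and> cmod (snd z) \<le> R"
  shows "Mf a b K \<gamma> \<le> R ^ (fst \<gamma> + snd \<gamma>)"
  using Mf_le[OF delta_MC[OF apos bpos]] sn_delta[OF R] by (rule order.trans)

lemma Mf_mult: "Mf a b K (addp \<alpha> \<beta>) \<le> Mf a b K \<alpha> * Mf a b K \<beta>"
proof -
  let ?S = "\<lambda>\<gamma>. supnorm K ` MC a b (degC a b \<gamma>) \<gamma>"
  have nn: "\<And>x \<gamma>. x \<in> ?S \<gamma> \<Longrightarrow> 0 \<le> x" by (auto intro!: sn_nonneg MC_finite[OF apos bpos])
  have key: "Mf a b K (addp \<alpha> \<beta>) \<le> supnorm K p * supnorm K q"
    if p: "p \<in> MC a b (degC a b \<alpha>) \<alpha>" and q: "q \<in> MC a b (degC a b \<beta>) \<beta>" for p q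
    using Mf_le[OF pmul_MC[OF apos bpos p q]] sn_mul[OF MC_finite[OF apos bpos p] MC_finite[OF apos bpos q]]
    by (rule order.trans)
  have step: "Mf a b K (addp \<alpha> \<beta>) \<le> Mf a b K \<alpha> * supnorm K q"
    if q: "q \<in> MC a b (degC a b \<beta>) \<beta>" for q
    unfolding Mf_def[of a b K \<alpha>]
  proof (rule inf_aux)
    show "?S \<alpha> \<noteq> {}" using MC_ne by simp
    show "\<And>x. x \<in> ?S \<alpha> \<Longrightarrow> 0 \<le> x" by (rule nn)
    show "0 \<le> supnorm K q" by (rule sn_nonneg[OF MC_finite[OF apos bpos q]])
    fix x assume "x \<in> ?S \<alpha>"
    then obtain p where "p \<in> MC a b (degC a b \<alpha>) \<alpha>" "x = supnorm K p" by blast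
    then show "Mf a b K (addp \<alpha> \<beta>) \<le> x * supnorm K q" using key q by simp
  qed
  have "Mf a b K (addp \<alpha> \<beta>) \<le> Mf a b K \<beta> * Mf a b K \<alpha>"
    unfolding Mf_def[of a b K \<beta>]
  proof (rule inf_aux)
    show "?S \<beta> \<noteq> {}" using MC_ne by simp
    show "\<And>x. x \<in> ?S \<beta> \<Longrightarrow> 0 \<le> x" by (rule nn)
    show "0 \<le> Mf a b K \<alpha>" by (rule Mf_nonneg)
    fix x assume "x \<in> ?S \<beta>"
    then obtain q where "q \<in> MC a b (degC a b \<beta>) \<beta>" "x = supnorm K q" by blast
    then show "Mf a b K (addp \<alpha> \<beta>) \<le> x * Mf a b K \<alpha>" using step by (simp add: mult.commute)
  qed
  then show ?thesis by (simp add: mult.commute)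
qed

lemma Mf_pow: "Mf a b K (addp (smul j \<alpha>) \<gamma>) \<le> Mf a b K \<alpha> ^ j * Mf a b K \<gamma>"
proof (induction j)
  case 0
  have "addp (smul 0 \<alpha>) \<gamma> = \<gamma>" by (simp add: addp_def smul_def)
  then show ?case by simp
next
  case (Suc j)
  have "addp (smul (Suc j) \<alpha>) \<gamma> = addp \<alpha> (addp (smul j \<alpha>) \<gamma>)" by (simp add: addp_def smul_def)
  then have "Mf a b K (addp (smul (Suc j) \<alpha>) \<gamma>) \<le> Mf a b K \<alpha> * Mf a b K (addp (smul j \<alpha>) \<gamma>)"
    using Mf_mult by simp
  also have "\<dots> \<le> Mf a b K \<alpha> * (Mf a b K \<alpha> ^ j * Mf a b K \<gamma>)"
    by (intro mult_left_mono Suc Mf_nonneg)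
  finally show ?case by (simp add: mult.assoc)
qed

end

lemma final_num:
  fixes MA MB R y y1 c dA D \<eta> L :: real and jn gn :: nat
  assumes MA: "MA \<ge> 0" and MB: "MB \<ge> 0" and R: "R \<ge> 1"
    and h1: "MB \<le> MA ^ jn * R ^ gn" and h2: "y1 < MB powr (1 / D)"
    and hg: "real gn \<le> c * (D - real jn * dA)" and c: "c \<ge> 0"
    and hx: "real jn * dA \<le> D" and hD: "D \<le> (1 + \<eta>) * (real jn * dA)"
    and dA: "dA > 0" and jn: "jn \<ge> 1" and y: "0 < y" "y < y1" and \<eta>: "\<eta> \<ge> 0"
    and hL: "\<eta> * L \<le> ln y1 - ln y" "L \<ge> c * ln R - ln y1" "L \<ge> 0"
  shows "y < MA powr (1 / dA)"
proof -
  define x where "x = real jn * dA"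
  define \<delta> where "\<delta> = D - x"
  have xpos: "x > 0" using dA jn by (simp add: x_def)
  have Dpos: "D > 0" using hx xpos x_def by linarith
  have y1pos: "y1 > 0" using y by linarith
  have MBpos: "MB > 0"
  proof (rule ccontr)
    assume "\<not> MB > 0" then have "MB = 0" using MB by simp
    then show False using h2 y1pos by simp
  qed
  have MApos: "MA > 0"
  proof (rule ccontr)
    assume "\<not> MA > 0" then have "MA = 0" using MA by simp
    then have "MA ^ jn = 0" using jn by simp
    then have "MA ^ jn * R ^ gn = 0" by simp
    then show False using h1 MBpos by linarith
  qed
  have lnR: "ln R \<ge> 0" using R by simp
  have e1: "ln MB \<le> real jn * ln MA + real gn * ln R"
  proof -
    have "ln MB \<le> ln (MA ^ jn * R ^ gn)" using h1 MBpos by simp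
    also have "\<dots> = real jn * ln MA + real gn * ln R"
      using MApos R by (simp add: ln_mult ln_realpow)
    finally show ?thesis .
  qed
  have e2: "D * ln y1 < ln MB"
  proof -
    have "ln y1 < ln (MB powr (1 / D))" using ln_less_cancel_iff[of y1 "MB powr (1 / D)"] h2 y1pos MBpos by simp
    also have "\<dots> = ln MB / D" using MBpos by (simp add: ln_powr)
    finally show ?thesis using Dpos by (simp add: field_simps)
  qed
  have e3: "real gn * ln R \<le> c * \<delta> * ln R"
    using mult_right_mono[OF hg lnR] by (simp add: \<delta>_def x_def)
  have \<delta>nn: "\<delta> \<ge> 0" using hx by (simp add: \<delta>_def x_def)
  have e4: "\<delta> * (ln y1 - c * ln R) \<ge> - (\<delta> * L)"
  proof -
    have "ln y1 - c * ln R \<ge> - L" using hL by linarith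
    from mult_left_mono[OF this \<delta>nn] show ?thesis by simp
  qed
  have e5: "\<delta> * L \<le> (\<eta> * x) * L"
  proof -
    have "\<delta> \<le> \<eta> * x" using hD by (simp add: \<delta>_def x_def algebra_simps)
    from mult_right_mono[OF this hL(3)] show ?thesis .
  qed
  have e6: "(\<eta> * x) * L \<le> x * (ln y1 - ln y)"
    using mult_left_mono[OF hL(1), of x] xpos by (simp add: algebra_simps)
  have e7: "D * ln y1 = x * ln y1 + \<delta> * ln y1" by (simp add: \<delta>_def algebra_simps)
  have e8: "c * \<delta> * ln R = \<delta> * (c * ln R)" by simp
  have "real jn * ln MA > x * ln y"
    using e1 e2 e3 e4 e5 e6 e7 e8 by (simp add: algebra_simps)
  then have "real jn * ln MA > real jn * (dA * ln y)" by (simp add: x_def algebra_simps)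
  then have "ln MA > dA * ln y" using jn by (simp add: mult_less_cancel_left)
  then have "ln y < ln MA / dA" using dA by (simp add: field_simps)
  also have "\<dots> = ln (MA powr (1 / dA))" using MApos by (simp add: ln_powr)
  finally have "ln y < ln (MA powr (1 / dA))" .
  then show ?thesis using MApos y by (subst (asm) ln_less_cancel_iff) auto
qed

lemma lattice_one:
  fixes A B j :: nat and \<theta> \<sigma> dA D :: real
  assumes Apos: "A > 0" and jdef: "j = B div A" and \<theta>: "\<theta> > 0" and \<sigma>: "0 < \<sigma>" "\<sigma> < 1/3"
    and dA: "dA > 0" and DdA: "\<sigma> * D \<ge> dA"
    and hA: "\<bar>real A - \<theta> * dA\<bar> < \<sigma> * \<theta> * dA"
    and hB: "\<bar>real B - \<theta> * D\<bar> < \<sigma> * \<theta> * D"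
  shows "(1 - 3 * \<sigma>) * D \<le> real j * dA"
proof -
  have "B < (j + 1) * A" using jdef Apos
    by (metis add.commute div_mult_mod_eq mod_less_divisor mult_Suc plus_1_eq_Suc add_less_cancel_right)
  then have "real B < (real j + 1) * real A" by (metis of_nat_add of_nat_1 of_nat_less_iff of_nat_mult)
  moreover have "real A < (1 + \<sigma>) * \<theta> * dA" using hA by (simp add: algebra_simps abs_less_iff)
  moreover have "real B > (1 - \<sigma>) * \<theta> * D" using hB by (simp add: algebra_simps abs_less_iff)
  ultimately have "(1 - \<sigma>) * \<theta> * D < (real j + 1) * ((1 + \<sigma>) * \<theta> * dA)"
    by (smt (verit) mult_left_mono of_nat_0_le_iff)
  then have "\<theta> * ((1 - \<sigma>) * D) < \<theta> * ((1 + \<sigma>) * ((real j + 1) * dA))" by (simp add: algebra_simps)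
  then have i1: "(1 - \<sigma>) * D < (1 + \<sigma>) * ((real j + 1) * dA)" using \<theta> by simp
  have "0 < \<sigma> * D" using DdA dA by linarith
  then have Dpos: "D > 0" using \<sigma>(1) zero_less_mult_pos by blast
  have i2: "(1 - 2 * \<sigma>) * D \<le> (real j + 1) * dA"
  proof (rule ccontr)
    assume "\<not> ?thesis"
    then have "(real j + 1) * dA < (1 - 2 * \<sigma>) * D" by simp
    then have "(1 + \<sigma>) * ((real j + 1) * dA) < (1 + \<sigma>) * ((1 - 2 * \<sigma>) * D)" using \<sigma> by simp
    also have "\<dots> = (1 - \<sigma>) * D - 2 * \<sigma> * \<sigma> * D" by (simp add: algebra_simps)
    also have "\<dots> \<le> (1 - \<sigma>) * D" using Dpos \<sigma> by simp
    finally show False using i1 by simp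
  qed
  then show ?thesis using DdA by (simp add: algebra_simps)
qed

definition Tf :: "nat \<Rightarrow> nat \<Rightarrow> (complex \<times> complex) set \<Rightarrow> nat \<times> nat \<Rightarrow> real" where
  "Tf a b K \<alpha> = Mf a b K \<alpha> powr (1 / degC a b \<alpha>)"

definition adm :: "nat \<Rightarrow> nat \<Rightarrow> real \<times> real \<Rightarrow> (nat \<Rightarrow> real) \<Rightarrow> (nat \<Rightarrow> nat \<times> nat) \<Rightarrow> bool" where
  "adm a b \<theta> k \<alpha> \<longleftrightarrow> filterlim k at_top sequentially \<and> (\<forall>n. k n = degC a b (\<alpha> n)) \<and>
     ((\<lambda>n. scaled (\<alpha> n) (k n)) \<longlongrightarrow> \<theta>) sequentially"

lemma rel_bound:
  fixes x t e k :: real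
  assumes "k \<ge> 1" "\<bar>x / k - t\<bar> < e * t"
  shows "\<bar>x - t * k\<bar> < e * t * k"
proof -
  have "\<bar>x - t * k\<bar> = \<bar>x / k - t\<bar> * k" using assms(1)
    by (simp add: abs_mult[symmetric] field_simps)
  also have "\<dots> < e * t * k" using assms by simp
  finally show ?thesis .
qed

lemma adm_ev:
  assumes ad: "adm a b \<theta> k \<alpha>" and e: "e > 0" and th: "fst \<theta> > 0" "snd \<theta> > 0"
  shows "eventually (\<lambda>n. k n \<ge> Z \<and> k n \<ge> 1 \<and>
     \<bar>real (fst (\<alpha> n)) - fst \<theta> * k n\<bar> < e * fst \<theta> * k n \<and>
     \<bar>real (snd (\<alpha> n)) - snd \<theta> * k n\<bar> < e * snd \<theta> * k n) sequentially"
proof -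
  have fl: "filterlim k at_top sequentially" and lim: "((\<lambda>n. scaled (\<alpha> n) (k n)) \<longlongrightarrow> \<theta>) sequentially"
    using ad by (auto simp: adm_def)
  have "\<forall>Z. eventually (\<lambda>x. Z \<le> k x) sequentially" using fl filterlim_at_top by blast
  then have e1: "eventually (\<lambda>n. k n \<ge> max Z 1) sequentially" by blast
  have l1: "((\<lambda>n. real (fst (\<alpha> n)) / k n) \<longlongrightarrow> fst \<theta>) sequentially"
    using tendsto_fst[OF lim] by (simp add: scaled_def)
  have l2: "((\<lambda>n. real (snd (\<alpha> n)) / k n) \<longlongrightarrow> snd \<theta>) sequentially"
    using tendsto_snd[OF lim] by (simp add: scaled_def)
  have e2: "eventually (\<lambda>n. \<bar>real (fst (\<alpha> n)) / k n - fst \<theta>\<bar> < e * fst \<theta>) sequentially"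
    using l1 e th unfolding tendsto_iff dist_real_def by simp
  have e3: "eventually (\<lambda>n. \<bar>real (snd (\<alpha> n)) / k n - snd \<theta>\<bar> < e * snd \<theta>) sequentially"
    using l2 e th unfolding tendsto_iff dist_real_def by simp
  show ?thesis
    using e1 e2 e3
  proof eventually_elim
    case (elim n)
    then show ?case using rel_bound[of "k n"] by auto
  qed
qed

context
  fixes a b :: nat and K :: "(complex \<times> complex) set" and \<theta> :: "real \<times> real"
  assumes apos: "a > 0" and bpos: "b > 0" and Kc: "compact K" and Kne: "K \<noteq> {}"
    and th1: "fst \<theta> > 0" and th2: "snd \<theta> > 0"
begin

lemma degC_smul: "degC a b (smul j \<alpha>) = real j * degC a b \<alpha>"
  by (simp add: degC_def smul_def field_simps)

lemma size_le_degC: "real (fst \<gamma> + snd \<gamma>) \<le> real (max a b) * degC a b \<gamma>"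
proof -
  have n: "(fst \<gamma> + snd \<gamma>) * (a * b) \<le> max a b * (a * fst \<gamma> + b * snd \<gamma>)"
  proof -
    have "fst \<gamma> * (a * b) \<le> max a b * (a * fst \<gamma>)" by (simp add: mult_le_mono algebra_simps)
    moreover have "snd \<gamma> * (a * b) \<le> max a b * (b * snd \<gamma>)" by (simp add: mult_le_mono algebra_simps)
    ultimately have "fst \<gamma> * (a * b) + snd \<gamma> * (a * b) \<le> max a b * (a * fst \<gamma>) + max a b * (b * snd \<gamma>)"
      by (rule add_mono)
    then show ?thesis by (simp only: add_mult_distrib add_mult_distrib2)
  qed
  have "real (fst \<gamma> + snd \<gamma>) * (real a * real b) \<le> real (max a b) * (real a * real (fst \<gamma>) + real b * real (snd \<gamma>))"
    using n by (metis of_nat_add of_nat_le_iff of_nat_mult)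
  then show ?thesis using apos bpos by (simp add: degC_def field_simps)
qed

lemma KL:
  assumes A: "adm a b \<theta> kA \<alpha>A" and B: "adm a b \<theta> kB \<alpha>B" and y: "0 < y" "y < y1"
    and fr: "frequently (\<lambda>m. y1 < Tf a b K (\<alpha>B m)) sequentially"
  shows "eventually (\<lambda>n. y < Tf a b K (\<alpha>A n)) sequentially"
proof -
  obtain R where R: "R \<ge> 1" "\<forall>z\<in>K. cmod (fst z) \<le> R \<and> cmod (snd z) \<le> R"
    using exR[OF apos bpos Kc Kne] by blast
  define c where "c = real (max a b)"
  define L where "L = max 0 (c * ln R - ln y1)"
  define \<eta> where "\<eta> = (ln y1 - ln y) / (L + 1)"
  define \<sigma> where "\<sigma> = \<eta> / (3 * (1 + \<eta>))"
  have lny: "ln y < ln y1" using y by simp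
  have L0: "L \<ge> 0" by (simp add: L_def)
  have \<eta>pos: "\<eta> > 0" using lny L0 by (simp add: \<eta>_def)
  have \<eta>L: "\<eta> * L \<le> ln y1 - ln y"
  proof -
    have "\<eta> * L = (ln y1 - ln y) * (L / (L + 1))" using L0 by (simp add: \<eta>_def field_simps)
    also have "\<dots> \<le> (ln y1 - ln y) * 1" using L0 lny by (intro mult_left_mono) auto
    finally show ?thesis by simp
  qed
  have \<sigma>pos: "\<sigma> > 0" using \<eta>pos by (simp add: \<sigma>_def)
  have \<sigma>3: "\<sigma> < 1/3" using \<eta>pos by (simp add: \<sigma>_def field_simps)
  have \<sigma>\<eta>: "(1 - 3 * \<sigma>) * (1 + \<eta>) = 1" using \<eta>pos by (simp add: \<sigma>_def field_simps)
  have c0: "c \<ge> 0" by (simp add: c_def)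
  have EA: "eventually (\<lambda>n. kA n \<ge> 1 \<and> kA n \<ge> 1 \<and>
     \<bar>real (fst (\<alpha>A n)) - fst \<theta> * kA n\<bar> < \<sigma> * fst \<theta> * kA n \<and>
     \<bar>real (snd (\<alpha>A n)) - snd \<theta> * kA n\<bar> < \<sigma> * snd \<theta> * kA n) sequentially"
    by (rule adm_ev[OF A \<sigma>pos th1 th2])
  show ?thesis using EA
  proof eventually_elim
    case (elim n)
    define dA where "dA = kA n"
    have dAeq: "dA = degC a b (\<alpha>A n)" using A by (simp add: adm_def dA_def)
    have dA1: "dA \<ge> 1" using elim by (simp add: dA_def)
    have EB: "eventually (\<lambda>m. kB m \<ge> dA / \<sigma> \<and> kB m \<ge> 1 \<and>
       \<bar>real (fst (\<alpha>B m)) - fst \<theta> * kB m\<bar> < \<sigma> * fst \<theta> * kB m \<and>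
       \<bar>real (snd (\<alpha>B m)) - snd \<theta> * kB m\<bar> < \<sigma> * snd \<theta> * kB m) sequentially"
      by (rule adm_ev[OF B \<sigma>pos th1 th2])
    obtain m where m: "kB m \<ge> dA / \<sigma>" "kB m \<ge> 1"
       "\<bar>real (fst (\<alpha>B m)) - fst \<theta> * kB m\<bar> < \<sigma> * fst \<theta> * kB m"
       "\<bar>real (snd (\<alpha>B m)) - snd \<theta> * kB m\<bar> < \<sigma> * snd \<theta> * kB m"
       "y1 < Tf a b K (\<alpha>B m)"
      using frequently_ex[OF frequently_eventually_conj[OF fr EB]] by blast
    define D where "D = kB m"
    have Deq: "D = degC a b (\<alpha>B m)" using B by (simp add: adm_def D_def)
    have DdA: "\<sigma> * D \<ge> dA" using m(1) \<sigma>pos by (simp add: D_def field_simps)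
    define A1 where "A1 = fst (\<alpha>A n)"
    define A2 where "A2 = snd (\<alpha>A n)"
    define B1 where "B1 = fst (\<alpha>B m)"
    define B2 where "B2 = snd (\<alpha>B m)"
    have hA1: "\<bar>real A1 - fst \<theta> * dA\<bar> < \<sigma> * fst \<theta> * dA" using elim by (simp add: A1_def dA_def)
    have hA2: "\<bar>real A2 - snd \<theta> * dA\<bar> < \<sigma> * snd \<theta> * dA" using elim by (simp add: A2_def dA_def)
    have hB1: "\<bar>real B1 - fst \<theta> * D\<bar> < \<sigma> * fst \<theta> * D" using m by (simp add: B1_def D_def)
    have hB2: "\<bar>real B2 - snd \<theta> * D\<bar> < \<sigma> * snd \<theta> * D" using m by (simp add: B2_def D_def)
    have dApos: "dA > 0" using dA1 by simp
    have A1pos: "A1 > 0"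
    proof -
      have "real A1 > (1 - \<sigma>) * fst \<theta> * dA" using hA1 by (simp add: abs_less_iff algebra_simps)
      moreover have "(1 - \<sigma>) * fst \<theta> * dA > 0" using \<sigma>3 th1 dApos by simp
      ultimately show ?thesis by simp
    qed
    have A2pos: "A2 > 0"
    proof -
      have "real A2 > (1 - \<sigma>) * snd \<theta> * dA" using hA2 by (simp add: abs_less_iff algebra_simps)
      moreover have "(1 - \<sigma>) * snd \<theta> * dA > 0" using \<sigma>3 th2 dApos by simp
      ultimately show ?thesis by simp
    qed
    define j1 where "j1 = B1 div A1"
    define j2 where "j2 = B2 div A2"
    define j where "j = min j1 j2"
    have l1: "(1 - 3 * \<sigma>) * D \<le> real j1 * dA"
      by (rule lattice_one[OF A1pos j1_def th1 \<sigma>pos \<sigma>3 dApos DdA hA1 hB1])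
    have l2: "(1 - 3 * \<sigma>) * D \<le> real j2 * dA"
      by (rule lattice_one[OF A2pos j2_def th2 \<sigma>pos \<sigma>3 dApos DdA hA2 hB2])
    have jd: "(1 - 3 * \<sigma>) * D \<le> real j * dA"
      using l1 l2 by (cases "j1 \<le> j2") (auto simp: j_def min_def)
    have jA1: "j * A1 \<le> B1"
    proof -
      have "j * A1 \<le> j1 * A1" by (simp add: j_def)
      also have "\<dots> \<le> B1" by (simp add: j1_def div_times_less_eq_dividend)
      finally show ?thesis .
    qed
    have jA2: "j * A2 \<le> B2"
    proof -
      have "j * A2 \<le> j2 * A2" by (simp add: j_def)
      also have "\<dots> \<le> B2" by (simp add: j2_def div_times_less_eq_dividend)
      finally show ?thesis .
    qed
    define \<gamma> where "\<gamma> = (B1 - j * A1, B2 - j * A2)"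
    have decomp: "\<alpha>B m = addp (smul j (\<alpha>A n)) \<gamma>"
      using jA1 jA2 by (simp add: addp_def smul_def \<gamma>_def A1_def A2_def B1_def B2_def prod_eq_iff)
    have Dpos: "D > 0" using m(2) by (simp add: D_def)
    have jpos: "real j * dA > 0"
    proof -
      have "(1 - 3 * \<sigma>) * D > 0" using \<sigma>3 Dpos by simp
      then show ?thesis using jd by linarith
    qed
    then have j1': "j \<ge> 1" using dApos by (cases j) auto
    have dg: "degC a b \<gamma> = D - real j * dA"
      using arg_cong[OF decomp, of "degC a b"] by (simp add: degC_addp[OF apos bpos] degC_smul Deq dAeq)
    have hx: "real j * dA \<le> D" using dg degC_nonneg[OF apos bpos, of \<gamma>] by simp
    have hD: "D \<le> (1 + \<eta>) * (real j * dA)"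
    proof -
      have "D = (1 + \<eta>) * ((1 - 3 * \<sigma>) * D)" using \<sigma>\<eta> by (simp add: algebra_simps)
      also have "\<dots> \<le> (1 + \<eta>) * (real j * dA)" using jd \<eta>pos by (intro mult_left_mono) auto
      finally show ?thesis .
    qed
    have hg: "real (fst \<gamma> + snd \<gamma>) \<le> c * (D - real j * dA)"
      using size_le_degC[of \<gamma>] dg by (simp add: c_def)
    have h1: "Mf a b K (\<alpha>B m) \<le> Mf a b K (\<alpha>A n) ^ j * R ^ (fst \<gamma> + snd \<gamma>)"
    proof -
      have "Mf a b K (\<alpha>B m) \<le> Mf a b K (\<alpha>A n) ^ j * Mf a b K \<gamma>"
        unfolding decomp by (rule Mf_pow[OF apos bpos Kc Kne])
      also have "\<dots> \<le> Mf a b K (\<alpha>A n) ^ j * R ^ (fst \<gamma> + snd \<gamma>)"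
        by (intro mult_left_mono Mf_R[OF apos bpos Kc Kne R(2)] zero_le_power Mf_nonneg[OF apos bpos Kc Kne])
      finally show ?thesis .
    qed
    have h2: "y1 < Mf a b K (\<alpha>B m) powr (1 / D)" using m(5) by (simp add: Tf_def Deq)
    have "y < Mf a b K (\<alpha>A n) powr (1 / dA)"
      by (rule final_num[OF Mf_nonneg[OF apos bpos Kc Kne] Mf_nonneg[OF apos bpos Kc Kne] R(1) h1 h2 hg c0 hx hD dApos j1' y
            less_imp_le[OF \<eta>pos] \<eta>L]) (auto simp: L_def)
    then show ?case by (simp add: Tf_def dAeq)
  qed
qed

end

lemma TC_Tf: "k = degC a b \<alpha> \<Longrightarrow> TC a b K k \<alpha> = Tf a b K \<alpha>"
  by (simp add: TC_def Tf_def Mf_def)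

lemma Tf_nonneg: "0 \<le> Tf a b K \<alpha>"
  by (simp add: Tf_def)

context
  fixes a b :: nat and K :: "(complex \<times> complex) set" and \<theta> :: "real \<times> real"
  assumes apos: "a > 0" and bpos: "b > 0" and Kc: "compact K" and Kne: "K \<noteq> {}"
    and th1: "fst \<theta> > 0" and th2: "snd \<theta> > 0"
begin

lemma Tf_bound: "\<exists>Bd. \<forall>\<alpha>. degC a b \<alpha> \<ge> 1 \<longrightarrow> Tf a b K \<alpha> \<le> Bd"
proof -
  obtain R where R: "R \<ge> 1" "\<forall>z\<in>K. cmod (fst z) \<le> R \<and> cmod (snd z) \<le> R"
    using exR[OF apos bpos Kc Kne] by blast
  define c where "c = real (max a b)"
  have "Tf a b K \<alpha> \<le> R powr c" if d: "degC a b \<alpha> \<ge> 1" for \<alpha>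
  proof -
    define d where "d = degC a b \<alpha>"
    have dpos: "d > 0" using d by (simp add: d_def)
    have "Mf a b K \<alpha> \<le> R ^ (fst \<alpha> + snd \<alpha>)" by (rule Mf_R[OF apos bpos Kc Kne R(2)])
    also have "\<dots> = R powr real (fst \<alpha> + snd \<alpha>)" by (rule powr_realpow[symmetric]) (use R(1) in simp)
    also have "\<dots> \<le> R powr (c * d)"
      using size_le_degC[OF apos bpos Kc Kne th1 th2, of \<alpha>] R(1) by (intro powr_mono) (auto simp: c_def d_def)
    finally have "Mf a b K \<alpha> \<le> R powr (c * d)" .
    then have "Mf a b K \<alpha> powr (1 / d) \<le> (R powr (c * d)) powr (1 / d)"
      using Mf_nonneg[OF apos bpos Kc Kne] dpos by (intro powr_mono2) auto
    also have "\<dots> = R powr c" using dpos by (simp add: powr_powr)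
    finally show ?thesis by (simp add: Tf_def d_def)
  qed
  then show ?thesis by blast
qed

lemma adm_ev1: "adm a b \<theta> k \<alpha> \<Longrightarrow> eventually (\<lambda>n. degC a b (\<alpha> n) \<ge> 1) sequentially"
proof -
  assume ad: "adm a b \<theta> k \<alpha>"
  have "eventually (\<lambda>n. k n \<ge> 1 \<and> k n \<ge> 1 \<and>
     \<bar>real (fst (\<alpha> n)) - fst \<theta> * k n\<bar> < 1 * fst \<theta> * k n \<and>
     \<bar>real (snd (\<alpha> n)) - snd \<theta> * k n\<bar> < 1 * snd \<theta> * k n) sequentially"
    by (rule adm_ev[OF ad _ th1 th2]) simp
  then show ?thesis by eventually_elim (use ad in \<open>simp add: adm_def\<close>)
qed

lemma LL:
  assumes A: "adm a b \<theta> kA \<alpha>A" and B: "adm a b \<theta> kB \<alpha>B"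
  shows "Limsup sequentially (\<lambda>n. ereal (Tf a b K (\<alpha>B n))) \<le> Liminf sequentially (\<lambda>n. ereal (Tf a b K (\<alpha>A n)))"
  unfolding le_Liminf_iff
proof (intro allI impI)
  fix y assume ylt: "y < Limsup sequentially (\<lambda>n. ereal (Tf a b K (\<alpha>B n)))"
  obtain Bd where Bd: "\<forall>\<alpha>. degC a b \<alpha> \<ge> 1 \<longrightarrow> Tf a b K \<alpha> \<le> Bd" using Tf_bound by blast
  have LsB: "Limsup sequentially (\<lambda>n. ereal (Tf a b K (\<alpha>B n))) \<le> ereal Bd"
  proof (rule Limsup_bounded)
    show "eventually (\<lambda>n. ereal (Tf a b K (\<alpha>B n)) \<le> ereal Bd) sequentially"
      using adm_ev1[OF B] by eventually_elim (simp add: Bd[rule_format])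
  qed
  show "eventually (\<lambda>n. y < ereal (Tf a b K (\<alpha>A n))) sequentially"
  proof (cases "y < 0")
    case True
    have "y < ereal (Tf a b K (\<alpha>A n))" for n
      using True Tf_nonneg[of a b K "\<alpha>A n"] by (simp add: order.strict_trans2)
    then show ?thesis by simp
  next
    case False
    then have y0: "y \<ge> 0" by simp
    from dense[OF ylt] obtain y1 where y1c: "y < y1 \<and> y1 < Limsup sequentially (\<lambda>n. ereal (Tf a b K (\<alpha>B n)))" ..
    note y1 = conjunct1[OF y1c] conjunct2[OF y1c]
    have "y1 < ereal Bd" using y1(2) LsB by (rule order.strict_trans2)
    then have y1fin: "y1 < \<infinity>" using order.strict_trans[of y1 "ereal Bd" \<infinity>] by simp
    have yfin: "y > - \<infinity>" using y0 by (simp add: order.strict_trans2)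
    obtain r where r: "y = ereal r" using yfin y1 y1fin by (cases y) auto
    obtain s where s: "y1 = ereal s" using y1 y1fin yfin by (cases y1) auto
    have rs: "r < s" using y1(1) r s by simp
    have r0: "r \<ge> 0" using y0 r by simp
    have fr: "frequently (\<lambda>m. s < Tf a b K (\<alpha>B m)) sequentially"
    proof (rule ccontr)
      assume "\<not> ?thesis"
      then have "eventually (\<lambda>m. \<not> s < Tf a b K (\<alpha>B m)) sequentially" by (simp add: frequently_def)
      then have "eventually (\<lambda>m. ereal (Tf a b K (\<alpha>B m)) \<le> y1) sequentially"
        by eventually_elim (simp add: s)
      then have "Limsup sequentially (\<lambda>n. ereal (Tf a b K (\<alpha>B n))) \<le> y1" by (rule Limsup_bounded)
      then show False using y1(2) by simp
    qed
    have "eventually (\<lambda>n. (r + s) / 2 < Tf a b K (\<alpha>A n)) sequentially"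
      by (rule KL[OF apos bpos Kc Kne th1 th2 A B _ _ fr]) (use rs r0 in auto)
    then show ?thesis by eventually_elim (use rs in \<open>simp add: r\<close>)
  qed
qed

lemma tau_conv:
  assumes A: "adm a b \<theta> k \<alpha>"
  shows "((\<lambda>n. TC a b K (k n) (\<alpha> n)) \<longlongrightarrow> tau a b K \<theta>) sequentially"
proof -
  obtain Bd where Bd: "\<forall>\<alpha>. degC a b \<alpha> \<ge> 1 \<longrightarrow> Tf a b K \<alpha> \<le> Bd" using Tf_bound by blast
  define X where "X = (\<lambda>\<alpha>::nat \<Rightarrow> nat \<times> nat. \<lambda>n. ereal (Tf a b K (\<alpha> n)))"
  have lele: "Liminf sequentially (X \<beta>) \<le> Limsup sequentially (X \<beta>)" for \<beta>
    by (rule Liminf_le_Limsup) simp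
  have eqA: "Liminf sequentially (X \<alpha>) = Limsup sequentially (X \<alpha>)"
    using LL[OF A A] lele[of \<alpha>] unfolding X_def by simp
  have lo: "0 \<le> Liminf sequentially (X \<alpha>)"
    by (rule Liminf_bounded) (simp add: X_def Tf_nonneg)
  have hi: "Limsup sequentially (X \<alpha>) \<le> ereal Bd"
  proof (rule Limsup_bounded)
    show "eventually (\<lambda>n. X \<alpha> n \<le> ereal Bd) sequentially"
      using adm_ev1[OF A] unfolding X_def by eventually_elim (simp add: Bd[rule_format])
  qed
  obtain t0 where t0: "Limsup sequentially (X \<alpha>) = ereal t0"
    using lo hi eqA by (cases "Limsup sequentially (X \<alpha>)") auto
  have conv: "((\<lambda>n. TC a b K (k' n) (\<alpha>' n)) \<longlongrightarrow> t0) sequentially" if B: "adm a b \<theta> k' \<alpha>'" for k' \<alpha>'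
  proof -
    have "Limsup sequentially (X \<alpha>') \<le> ereal t0" using LL[OF A B] eqA t0 unfolding X_def by simp
    moreover have "ereal t0 \<le> Liminf sequentially (X \<alpha>')" using LL[OF B A] t0 unfolding X_def by simp
    ultimately have "Liminf sequentially (X \<alpha>') = ereal t0" "Limsup sequentially (X \<alpha>') = ereal t0"
      using lele[of \<alpha>'] by auto
    then have "(X \<alpha>' \<longlongrightarrow> ereal t0) sequentially" by (intro Liminf_eq_Limsup) auto
    then have "((\<lambda>n. Tf a b K (\<alpha>' n)) \<longlongrightarrow> t0) sequentially" by (simp add: X_def)
    moreover have "TC a b K (k' n) (\<alpha>' n) = Tf a b K (\<alpha>' n)" for n
      using B by (intro TC_Tf) (simp add: adm_def)
    ultimately show ?thesis by simp
  qed
  have "tau a b K \<theta> = t0"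
    unfolding tau_def
  proof (rule the_equality)
    show "\<forall>k \<alpha>. filterlim k at_top sequentially \<and> (\<forall>n. k n = degC a b (\<alpha> n)) \<and>
             ((\<lambda>n. scaled (\<alpha> n) (k n)) \<longlongrightarrow> \<theta>) sequentially \<longrightarrow>
             ((\<lambda>n. TC a b K (k n) (\<alpha> n)) \<longlongrightarrow> t0) sequentially"
      using conv by (auto simp: adm_def)
  next
    fix t assume "\<forall>k \<alpha>. filterlim k at_top sequentially \<and> (\<forall>n. k n = degC a b (\<alpha> n)) \<and>
             ((\<lambda>n. scaled (\<alpha> n) (k n)) \<longlongrightarrow> \<theta>) sequentially \<longrightarrow>
             ((\<lambda>n. TC a b K (k n) (\<alpha> n)) \<longlongrightarrow> t) sequentially"
    then have "((\<lambda>n. TC a b K (k n) (\<alpha> n)) \<longlongrightarrow> t) sequentially" using A by (auto simp: adm_def)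
    then show "t = t0" using conv[OF A] LIMSEQ_unique by blast
  qed
  then show ?thesis using conv[OF A] by simp
qed

end

lemma root_pow_ne1:
  fixes N s :: nat
  assumes "0 < s" "s < N"
  shows "exp (\<i> * of_real (2 * pi / N)) ^ s \<noteq> 1"
proof
  assume h: "exp (\<i> * of_real (2 * pi / N)) ^ s = 1"
  have "exp (\<i> * of_real (2 * pi / N)) ^ s = exp (of_nat s * (\<i> * of_real (2 * pi / N)))"
    by (rule exp_of_nat_mult[symmetric])
  also have "of_nat s * (\<i> * of_real (2 * pi / N)) = Complex 0 (2 * pi * s / N)"
    by (simp add: complex_eq_iff)
  finally have "exp (Complex 0 (2 * pi * s / N)) = 1" using h by simp
  then obtain n :: int where n: "2 * pi * s / N = of_int (2 * n) * pi" by (auto simp: exp_eq_1)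
  have Npos: "real N > 0" using assms by simp
  then have "real s = real_of_int n * real N" using n by (simp add: field_simps)
  moreover have "0 < real s" "real s < real N" using assms by auto
  ultimately have "0 < real_of_int n" "real_of_int n < 1" using Npos
    by (auto simp: zero_less_mult_iff)
  then have "0 < n" "n < 1" by simp_all
  then show False by linarith
qed

lemma root_pow_N:
  fixes N :: nat
  assumes "N > 0"
  shows "exp (\<i> * of_real (2 * pi / N)) ^ N = 1"
proof -
  have "exp (\<i> * of_real (2 * pi / N)) ^ N = exp (of_nat N * (\<i> * of_real (2 * pi / N)))"
    by (rule exp_of_nat_mult[symmetric])
  also have "of_nat N * (\<i> * of_real (2 * pi / N)) = \<i> * (of_real pi * 2)"
    using assms by (simp add: complex_eq_iff)
  finally show ?thesis by simp
qed

lemma root_sum: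
  fixes N s :: nat
  assumes "0 < s" "s \<le> N"
  shows "(\<Sum>r<N. (exp (\<i> * of_real (2 * pi / N)) ^ s) ^ r) = (if s = N then of_nat N else 0)"
proof -
  define x where "x = exp (\<i> * of_real (2 * pi / N)) ^ s"
  have NP: "N > 0" using assms by simp
  have "x ^ N = (exp (\<i> * of_real (2 * pi / N)) ^ N) ^ s"
    unfolding x_def by (simp only: power_mult[symmetric] mult.commute)
  then have xN: "x ^ N = 1" using root_pow_N[OF NP] by simp
  show ?thesis
  proof (cases "s = N")
    case True
    then have "x = 1" using root_pow_N[OF NP] by (simp add: x_def)
    then show ?thesis using True by (simp add: x_def)
  next
    case False
    then have "x \<noteq> 1" using root_pow_ne1[of s N] assms by (simp add: x_def)
    then have "(\<Sum>r<N. x ^ r) = 0" using xN by (simp add: sum_gp_strict)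
    then show ?thesis unfolding x_def[symmetric] using False by simp
  qed
qed

lemma topC_val:
  assumes "a > 0" "b > 0"
  shows "topC a b (degC a b \<alpha>) p \<beta> = (if wt a b \<beta> = wt a b \<alpha> then p \<beta> else 0)"
proof -
  have "degC a b \<alpha> * real a * real b = real (wt a b \<alpha>)" using assms by (simp add: degC_wt)
  moreover have "real a * real (fst \<beta>) + real b * real (snd \<beta>) = real (wt a b \<beta>)" by (simp add: wt_def)
  ultimately show ?thesis by (cases \<beta>) (simp add: topC_def)
qed

lemma topC_supp: "a > 0 \<Longrightarrow> b > 0 \<Longrightarrow> supp (topC a b (degC a b \<alpha>) p) \<subseteq> supp p"
  by (auto simp: supp_def topC_val split: if_splits)

lemma topC_MC:
  assumes "a > 0" "b > 0" "p \<in> MC a b (degC a b \<alpha>) \<alpha>"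
  shows "topC a b (degC a b \<alpha>) p \<in> MC a b (degC a b \<alpha>) \<alpha>"
proof -
  have h: "\<forall>\<beta>. p \<beta> \<noteq> 0 \<longrightarrow> \<beta> = \<alpha> \<or> precC a b \<beta> \<alpha>" "p \<alpha> = 1" using assms MC_iff by blast+
  have "\<forall>\<beta>. topC a b (degC a b \<alpha>) p \<beta> \<noteq> 0 \<longrightarrow> \<beta> = \<alpha> \<or> precC a b \<beta> \<alpha>"
  proof (intro allI impI)
    fix \<beta> assume "topC a b (degC a b \<alpha>) p \<beta> \<noteq> 0"
    then have "p \<beta> \<noteq> 0" using assms by (simp add: topC_val split: if_splits)
    then show "\<beta> = \<alpha> \<or> precC a b \<beta> \<alpha>" using h(1) by blast
  qed
  moreover have "topC a b (degC a b \<alpha>) p \<alpha> = 1" using assms h(2) by (simp add: topC_val)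
  ultimately show ?thesis using MC_iff[OF assms(1,2)] by blast
qed

context
  fixes a b :: nat and K :: "(complex \<times> complex) set"
  assumes apos: "a > 0" and bpos: "b > 0" and Kc: "compact K" and Kne: "K \<noteq> {}"
    and inv: "\<And>t::real. (\<lambda>z. (exp (\<i> * t) ^ a * fst z, exp (\<i> * t) ^ b * snd z)) ` K = K"
begin

lemma top_le:
  assumes p: "p \<in> MC a b (degC a b \<alpha>) \<alpha>"
  shows "supnorm K (topC a b (degC a b \<alpha>) p) \<le> supnorm K p"
proof (rule sn_le[OF apos bpos Kc Kne])
  fix z assume z: "z \<in> K"
  define W where "W = wt a b \<alpha>"
  define N where "N = W + 1"
  define \<omega> where "\<omega> = exp (\<i> * of_real (2 * pi / N))"
  define S where "S = supp p"
  define zr where "zr = (\<lambda>r::nat. ((\<omega> ^ r) ^ a * fst z, (\<omega> ^ r) ^ b * snd z))"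
  have fS: "finite S" using MC_finite[OF apos bpos p] by (simp add: S_def)
  have NP: "N > 0" by (simp add: N_def)
  have wtS: "wt a b \<beta> \<le> W" if "\<beta> \<in> S" for \<beta>
  proof -
    have "\<beta> = \<alpha> \<or> precC a b \<beta> \<alpha>" using p that unfolding MC_iff[OF apos bpos] S_def supp_def by blast
    then show ?thesis by (auto simp: precC_wt[OF apos bpos] W_def)
  qed
  have zrK: "zr r \<in> K" for r
  proof -
    have "\<omega> ^ r = exp (of_nat r * (\<i> * of_real (2 * pi / N)))" unfolding \<omega>_def by (rule exp_of_nat_mult[symmetric])
    also have "of_nat r * (\<i> * of_real (2 * pi / N)) = \<i> * of_real (2 * pi * r / N)" by simp
    finally have e: "\<omega> ^ r = exp (\<i> * of_real (2 * pi * r / N))" .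
    have "zr r \<in> (\<lambda>z. (exp (\<i> * of_real (2 * pi * r / N)) ^ a * fst z, exp (\<i> * of_real (2 * pi * r / N)) ^ b * snd z)) ` K"
      using z unfolding zr_def e by blast
    then show ?thesis using inv[of "2 * pi * r / N"] by simp
  qed
  have mon_zr: "mon (zr r) \<beta> = (\<omega> ^ r) ^ wt a b \<beta> * mon z \<beta>" for r \<beta>
    by (simp add: mon_def zr_def wt_def power_mult_distrib power_add power_mult[symmetric] algebra_simps)
  have pev: "peval p (zr r) = (\<Sum>\<beta>\<in>S. p \<beta> * ((\<omega> ^ r) ^ wt a b \<beta> * mon z \<beta>))" for r
    using peval_supp[OF fS[unfolded S_def]] by (simp add: S_def mon_zr)
  have "(\<Sum>r<N. \<omega> ^ r * peval p (zr r)) = (\<Sum>r<N. \<Sum>\<beta>\<in>S. p \<beta> * mon z \<beta> * (\<omega> ^ (wt a b \<beta> + 1)) ^ r)"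
  proof (intro sum.cong refl)
    fix r
    have "\<omega> ^ r * peval p (zr r) = (\<Sum>\<beta>\<in>S. \<omega> ^ r * (p \<beta> * ((\<omega> ^ r) ^ wt a b \<beta> * mon z \<beta>)))"
      unfolding pev by (rule sum_distrib_left)
    also have "\<dots> = (\<Sum>\<beta>\<in>S. p \<beta> * mon z \<beta> * (\<omega> ^ (wt a b \<beta> + 1)) ^ r)"
    proof (intro sum.cong refl)
      fix \<beta>
      define w where "w = wt a b \<beta>"
      have "(\<omega> ^ (w + 1)) ^ r = (\<omega> ^ r) ^ (w + 1)" by (simp only: power_mult[symmetric] mult.commute)
      also have "\<dots> = (\<omega> ^ r) ^ w * \<omega> ^ r" by (simp only: power_add power_one_right)
      finally have e: "(\<omega> ^ (w + 1)) ^ r = (\<omega> ^ r) ^ w * \<omega> ^ r" .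
      show "\<omega> ^ r * (p \<beta> * ((\<omega> ^ r) ^ wt a b \<beta> * mon z \<beta>)) = p \<beta> * mon z \<beta> * (\<omega> ^ (wt a b \<beta> + 1)) ^ r"
        unfolding w_def[symmetric] e by (simp only: ac_simps)
    qed
    finally show "\<omega> ^ r * peval p (zr r) = (\<Sum>\<beta>\<in>S. p \<beta> * mon z \<beta> * (\<omega> ^ (wt a b \<beta> + 1)) ^ r)" .
  qed
  also have "\<dots> = (\<Sum>\<beta>\<in>S. p \<beta> * mon z \<beta> * (\<Sum>r<N. (\<omega> ^ (wt a b \<beta> + 1)) ^ r))"
    by (subst sum.swap) (simp add: sum_distrib_left)
  also have "\<dots> = (\<Sum>\<beta>\<in>S. p \<beta> * mon z \<beta> * (if wt a b \<beta> = W then of_nat N else 0))"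
  proof (intro sum.cong refl)
    fix \<beta> assume "\<beta> \<in> S"
    then have "wt a b \<beta> + 1 \<le> N" using wtS by (simp add: N_def)
    then have "(\<Sum>r<N. (\<omega> ^ (wt a b \<beta> + 1)) ^ r) = (if wt a b \<beta> + 1 = N then of_nat N else 0)"
      unfolding \<omega>_def by (intro root_sum) auto
    then show "p \<beta> * mon z \<beta> * (\<Sum>r<N. (\<omega> ^ (wt a b \<beta> + 1)) ^ r) = p \<beta> * mon z \<beta> * (if wt a b \<beta> = W then of_nat N else 0)"
      by (simp add: N_def)
  qed
  also have "\<dots> = of_nat N * (\<Sum>\<beta>\<in>S. topC a b (degC a b \<alpha>) p \<beta> * mon z \<beta>)"
    unfolding sum_distrib_left by (intro sum.cong refl) (simp add: topC_val[OF apos bpos] W_def)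
  also have "\<dots> = of_nat N * peval (topC a b (degC a b \<alpha>) p) z"
    using peval_superset[OF fS] topC_supp[OF apos bpos] by (simp add: S_def)
  finally have id: "of_nat N * peval (topC a b (degC a b \<alpha>) p) z = (\<Sum>r<N. \<omega> ^ r * peval p (zr r))" by simp
  have nw: "cmod \<omega> = 1" by (simp add: \<omega>_def)
  have "real N * cmod (peval (topC a b (degC a b \<alpha>) p) z) = cmod (\<Sum>r<N. \<omega> ^ r * peval p (zr r))"
    using id[symmetric] by (simp add: norm_mult)
  also have "\<dots> \<le> (\<Sum>r<N. cmod (\<omega> ^ r * peval p (zr r)))" by (rule norm_sum)
  also have "\<dots> = (\<Sum>r<N. cmod (peval p (zr r)))" by (simp add: norm_mult norm_power nw)
  also have "\<dots> \<le> (\<Sum>r<N. supnorm K p)"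
    by (intro sum_mono sn_ge[OF apos bpos Kc Kne] MC_finite[OF apos bpos p] zrK)
  also have "\<dots> = real N * supnorm K p" by simp
  finally show "cmod (peval (topC a b (degC a b \<alpha>) p) z) \<le> supnorm K p" using NP by simp
qed

end

theorem proposition8p1:
  fixes a b :: nat and K :: "(complex \<times> complex) set" and \<theta> :: "real \<times> real"
    and Q :: "nat \<Rightarrow> poly2" and k :: "nat \<Rightarrow> real" and \<alpha> :: "nat \<Rightarrow> nat \<times> nat"
  assumes "a > 0" and "b > 0" and "coprime a b"
    and "compact K" and "\<not> pluripolar K"
    and "\<And>t::real. (\<lambda>z. (exp (\<i> * t) ^ a * fst z, exp (\<i> * t) ^ b * snd z)) ` K = K"
    and "\<theta> \<in> CurveC a b"
    and "asymp_cheb a b K \<theta> Q k \<alpha>"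
  shows "asymp_cheb a b K \<theta> (\<lambda>n. topC a b (k n) (Q n)) k \<alpha>"
proof -
  note apos = assms(1) and bpos = assms(2) and Kc = assms(4)
  have kd: "\<forall>n. k n = degC a b (\<alpha> n)" and QM: "\<forall>n. Q n \<in> MC a b (k n) (\<alpha> n)"
    and fl: "filterlim k at_top sequentially"
    and sl: "((\<lambda>n. scaled (\<alpha> n) (k n)) \<longlongrightarrow> \<theta>) sequentially"
    and nl: "((\<lambda>n. supnorm K (Q n) powr (1 / k n)) \<longlongrightarrow> tau a b K \<theta>) sequentially"
  proof -
    note ac = assms(8)[unfolded asymp_cheb_def]
    show "\<forall>n. k n = degC a b (\<alpha> n)" using conjunct1[OF ac] by blast
    show "\<forall>n. Q n \<in> MC a b (k n) (\<alpha> n)" using conjunct1[OF ac] by blast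
    show "filterlim k at_top sequentially" using ac by blast
    show "((\<lambda>n. scaled (\<alpha> n) (k n)) \<longlongrightarrow> \<theta>) sequentially" using ac by blast
    show "((\<lambda>n. supnorm K (Q n) powr (1 / k n)) \<longlongrightarrow> tau a b K \<theta>) sequentially" using ac by blast
  qed
  have QM': "Q n \<in> MC a b (degC a b (\<alpha> n)) (\<alpha> n)" for n using QM kd by metis
  have cv: "real a * fst \<theta> + real b * snd \<theta> = real a * real b" "fst \<theta> * snd \<theta> > 0"
    using assms(7) by (auto simp: CurveC_def)
  have th: "fst \<theta> > 0 \<and> snd \<theta> > 0"
  proof (rule ccontr)
    assume "\<not> ?thesis"
    then have "fst \<theta> < 0 \<and> snd \<theta> < 0" using cv(2) by (auto simp: zero_less_mult_iff)
    then have "real a * fst \<theta> + real b * snd \<theta> < 0" using apos bpos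
      by (simp add: add_neg_neg mult_pos_neg)
    moreover have "real a * real b > 0" using apos bpos by simp
    ultimately show False using cv(1) by linarith
  qed
  have topM: "topC a b (k n) (Q n) \<in> MC a b (k n) (\<alpha> n)" for n
    using topC_MC[OF apos bpos QM'[of n]] kd by metis
  have lim: "((\<lambda>n. supnorm K (topC a b (k n) (Q n)) powr (1 / k n)) \<longlongrightarrow> tau a b K \<theta>) sequentially"
  proof (cases "K = {}")
    case True
    have "supnorm K (topC a b (k n) (Q n)) = supnorm K (Q n)" for n by (simp add: supnorm_def True)
    then show ?thesis using nl by simp
  next
    case False
    have ad: "adm a b \<theta> k \<alpha>" using fl kd sl by (simp add: adm_def)
    have TCl: "((\<lambda>n. TC a b K (k n) (\<alpha> n)) \<longlongrightarrow> tau a b K \<theta>) sequentially"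
      using tau_conv[OF apos bpos Kc False conjunct1[OF th] conjunct2[OF th] ad] .
    have low: "TC a b K (k n) (\<alpha> n) \<le> supnorm K (topC a b (k n) (Q n)) powr (1 / k n)" for n
    proof -
      have TCe: "TC a b K (k n) (\<alpha> n) = Mf a b K (\<alpha> n) powr (1 / k n)"
        using kd by (simp add: TC_def Mf_def)
      have "Mf a b K (\<alpha> n) \<le> supnorm K (topC a b (k n) (Q n))"
        using Mf_le[OF apos bpos Kc False] topM[of n] kd by metis
      moreover have "0 \<le> 1 / k n" using kd degC_nonneg[OF apos bpos, of "\<alpha> n"] by simp
      ultimately show ?thesis unfolding TCe
        by (intro powr_mono2) (auto intro: Mf_nonneg[OF apos bpos Kc False])
    qed
    have up: "supnorm K (topC a b (k n) (Q n)) powr (1 / k n) \<le> supnorm K (Q n) powr (1 / k n)" for n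
    proof -
      have "supnorm K (topC a b (k n) (Q n)) \<le> supnorm K (Q n)"
        using top_le[OF apos bpos Kc False assms(6) QM'[of n]] kd by metis
      moreover have "0 \<le> 1 / k n" using kd degC_nonneg[OF apos bpos, of "\<alpha> n"] by simp
      moreover have tm': "topC a b (k n) (Q n) \<in> MC a b (degC a b (\<alpha> n)) (\<alpha> n)" using topM[of n] kd by metis
      moreover have "0 \<le> supnorm K (topC a b (k n) (Q n))"
        by (rule sn_nonneg[OF apos bpos Kc False MC_finite[OF apos bpos tm']])
      ultimately show ?thesis by (intro powr_mono2) auto
    qed
    show ?thesis
      by (rule tendsto_sandwich[OF _ _ TCl nl]) (use low up in auto)
  qed
  show ?thesis unfolding asymp_cheb_def using kd topM fl sl lim by auto
qed

end
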